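(* For all $r,i\in\mathbb{Z}$, $\beta\in\Bbbk^*$ and $m\ge0$, the $(m+1)\times(m+1)$ matrix $\mathcal{A}_\beta^{r,i}(m)$ with entries $(\mathcal{A}_\beta^{r,i}(m))_{k,l}=c_\beta^{r,i}(k,l)$ for $0\le l\le k\le m$ and $0$ otherwise is a comatrix over $H$, i.e. $\Delta(c_{kl})=\sum_{p=0}^mc_{kp}\otimes c_{pl}$ and $\varepsilon(c_{kl})=\delta_{k,l}$ for all $0\le k,l\le m$, where $c_{kl}$ denotes the $(k,l)$ entry.
   Context: $\Bbbk$ is an algebraically closed field of characteristic $0$; $n,w$ positive integers, $\gamma$ a primitive $n$-th root of unity. $H=B(n,w,\gamma)$ is the Hopf algebra generated by $x^{\pm1},g,y$ with relations $xx^{-1}=x^{-1}x=1$, $xg=gx$, $xy=yx$, $yg=\gamma gy$, $y^n=1-x^w=1-g^n$, with $\Delta(x)=x\otimes x$, $\Delta(g)=g\otimes g$, $\Delta(y)=y\otimes g+1\otimes y$, $\varepsilon(x)=\varepsilon(g)=1$, $\varepsilon(y)=0$, $S(x)=x^{-1}$, $S(g)=g^{-1}$, $S(y)=-yg^{-1}$. The elements $c_\beta^{r,i}(k,l)\in H$ ($0\le l\le k$) are defined by $c_\beta^{r,i}(0,0)=x^rg^i$ and, for $k\ge0$: $c_\beta^{r,i}(k+1,0)=c_\beta^{r,i}(k,0)S(y)+\beta yc_\beta^{r,i}(k,0)S(g)$; for $0<l<k+1$, $c_\beta^{r,i}(k+1,l)=c_\beta^{r,i}(k,l)S(y)+\beta\gamma^{-l}yc_\beta^{r,i}(k,l)S(g)+c_\beta^{r,i}(k,l-1)S(g)$;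 $c_\beta^{r,i}(k+1,k+1)=c_\beta^{r,i}(k,k)S(g)$. *)

theory Defs
  imports "HOL-Library.Poly_Mapping" "HOL-Computational_Algebra.Polynomial"
begin

text \<open>Concrete model of H = B(n,w,gamma) via its PBW basis x^a g^b y^c
 (a in Z, 0 <= b < n, 0 <= c < n). A basis "word" (a,b,c) stands for x^a g^b y^c;
 words with b >= n or c >= n are reduced using g^n = x^w and y^n = 1 - x^w.\<close>

type_synonym word = "int \<times> nat \<times> nat"
type_synonym 'k H = "word \<Rightarrow>\<^sub>0 'k"
type_synonym 'k HH = "(word \<times> word) \<Rightarrow>\<^sub>0 'k"

definition smul :: "'k::comm_ring_1 \<Rightarrow> ('b \<Rightarrow>\<^sub>0 'k) \<Rightarrow> ('b \<Rightarrow>\<^sub>0 'k)" where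
  "smul c p = Poly_Mapping.map (\<lambda>v. c * v) p"

definition bilin :: "('a \<Rightarrow> 'b \<Rightarrow> ('c \<Rightarrow>\<^sub>0 'k::comm_ring_1))
    \<Rightarrow> ('a \<Rightarrow>\<^sub>0 'k) \<Rightarrow> ('b \<Rightarrow>\<^sub>0 'k) \<Rightarrow> ('c \<Rightarrow>\<^sub>0 'k)" where
  "bilin m p q = (\<Sum>u\<in>Poly_Mapping.keys p. \<Sum>v\<in>Poly_Mapping.keys q. smul (Poly_Mapping.lookup p u * Poly_Mapping.lookup q v) (m u v))"

definition linext :: "('a \<Rightarrow> ('c \<Rightarrow>\<^sub>0 'k::comm_ring_1)) \<Rightarrow> ('a \<Rightarrow>\<^sub>0 'k) \<Rightarrow> ('c \<Rightarrow>\<^sub>0 'k)" where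
  "linext f p = (\<Sum>s\<in>Poly_Mapping.keys p. smul (Poly_Mapping.lookup p s) (f s))"

text \<open>reduction of the word x^a g^b y^c to the PBW basis:
  x^a g^b y^c = x^(a + w (b div n)) g^(b mod n) y^(c mod n) (1 - x^w)^(c div n)\<close>
definition normalize :: "nat \<Rightarrow> nat \<Rightarrow> word \<Rightarrow> 'k::comm_ring_1 H" where
  "normalize n w abc = (case abc of (a, b, c) \<Rightarrow>
     (\<Sum>j\<le>c div n. Poly_Mapping.single
        (a + int w * int (b div n) + int w * int j, b mod n, c mod n)
        ((-1) ^ j * of_nat ((c div n) choose j))))"

text \<open>(x^a g^b y^c)(x^a' g^b' y^c') = gamma^(c b') x^(a+a') g^(b+b') y^(c+c'), since y g = gamma g y\<close>
definition basis_mult :: "nat \<Rightarrow> nat \<Rightarrow> 'k::comm_ring_1 \<Rightarrow> word \<Rightarrow> word \<Rightarrow> 'k H" where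
  "basis_mult n w \<gamma> s t = (case s of (a, b, c) \<Rightarrow> case t of (a', b', c') \<Rightarrow>
     smul (\<gamma> ^ (c * b')) (normalize n w (a + a', b + b', c + c')))"

definition hmul :: "nat \<Rightarrow> nat \<Rightarrow> 'k::comm_ring_1 \<Rightarrow> 'k H \<Rightarrow> 'k H \<Rightarrow> 'k H" where
  "hmul n w \<gamma> = bilin (basis_mult n w \<gamma>)"

definition tens :: "'k::comm_ring_1 H \<Rightarrow> 'k H \<Rightarrow> 'k HH" where
  "tens = bilin (\<lambda>s t. Poly_Mapping.single (s, t) 1)"

definition tmul :: "nat \<Rightarrow> nat \<Rightarrow> 'k::comm_ring_1 \<Rightarrow> 'k HH \<Rightarrow> 'k HH \<Rightarrow> 'k HH" where
  "tmul n w \<gamma> = bilin (\<lambda>st st'. tens (basis_mult n w \<gamma> (fst st) (fst st'))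
                                     (basis_mult n w \<gamma> (snd st) (snd st')))"

definition Hone :: "'k::comm_ring_1 H" where "Hone = Poly_Mapping.single (0, 0, 0) 1"
definition Hg :: "'k::comm_ring_1 H" where "Hg = Poly_Mapping.single (0, 1, 0) 1"
definition Hy :: "'k::comm_ring_1 H" where "Hy = Poly_Mapping.single (0, 0, 1) 1"

text \<open>the element x^r g^i for r, i integers (g^n = x^w, so g^i = x^(w (i div n)) g^(i mod n))\<close>
definition xg :: "nat \<Rightarrow> nat \<Rightarrow> int \<Rightarrow> int \<Rightarrow> 'k::comm_ring_1 H" where
  "xg n w r i = Poly_Mapping.single (r + int w * (i div int n), nat (i mod int n), 0) 1"

text \<open>antipode on generators: S(g) = g^(-1), S(y) = - y g^(-1)\<close>
definition Sg :: "nat \<Rightarrow> nat \<Rightarrow> 'k::comm_ring_1 H" where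
  "Sg n w = xg n w 0 (-1)"
definition Sy :: "nat \<Rightarrow> nat \<Rightarrow> 'k::comm_ring_1 \<Rightarrow> 'k H" where
  "Sy n w \<gamma> = - hmul n w \<gamma> Hy (Sg n w)"

definition Delta_y :: "'k::comm_ring_1 HH" where
  "Delta_y = tens Hy Hg + tens Hone Hy"
definition Delta_basis :: "nat \<Rightarrow> nat \<Rightarrow> 'k::comm_ring_1 \<Rightarrow> word \<Rightarrow> 'k HH" where
  "Delta_basis n w \<gamma> s = (case s of (a, b, c) \<Rightarrow>
     tmul n w \<gamma> (Poly_Mapping.single ((a, b, 0), (a, b, 0)) 1)
       ((tmul n w \<gamma> Delta_y ^^ c) (tens Hone Hone)))"
definition Delta :: "nat \<Rightarrow> nat \<Rightarrow> 'k::comm_ring_1 \<Rightarrow> 'k H \<Rightarrow> 'k HH" where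
  "Delta n w \<gamma> = linext (Delta_basis n w \<gamma>)"

definition eps :: "'k::comm_ring_1 H \<Rightarrow> 'k" where
  "eps p = (\<Sum>s\<in>Poly_Mapping.keys p. Poly_Mapping.lookup p s * (if snd (snd s) = 0 then 1 else 0))"

fun cmat :: "nat \<Rightarrow> nat \<Rightarrow> 'k::field \<Rightarrow> 'k \<Rightarrow> int \<Rightarrow> int \<Rightarrow> nat \<Rightarrow> nat \<Rightarrow> 'k H" where
  "cmat n w \<gamma> \<beta> r i 0 l = (if l = 0 then xg n w r i else 0)"
| "cmat n w \<gamma> \<beta> r i (Suc k) l =
     (let C = cmat n w \<gamma> \<beta> r i k; mul = hmul n w \<gamma> in
      if l = 0 then mul (C 0) (Sy n w \<gamma>) + smul \<beta> (mul (mul Hy (C 0)) (Sg n w))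
      else if l < Suc k then mul (C l) (Sy n w \<gamma>)
             + smul (\<beta> * inverse (\<gamma> ^ l)) (mul (mul Hy (C l)) (Sg n w))
             + mul (C (l - 1)) (Sg n w)
      else if l = Suc k then mul (C k) (Sg n w)
      else 0)"

definition Amat :: "nat \<Rightarrow> nat \<Rightarrow> 'k::field \<Rightarrow> 'k \<Rightarrow> int \<Rightarrow> int \<Rightarrow> nat \<Rightarrow> nat \<Rightarrow> nat \<Rightarrow> 'k H" where
  "Amat n w \<gamma> \<beta> r i m k l = (if l \<le> k \<and> k \<le> m then cmat n w \<gamma> \<beta> r i k l else 0)"

end

theory Submission
  imports Defs
begin


lemma lookup_smul[simp]: "Poly_Mapping.lookup (smul c p) s = c * Poly_Mapping.lookup p s"
  unfolding smul_def by (simp add: Poly_Mapping.map.rep_eq when_def)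

lemma smul_add[simp]: "smul c (p + q) = smul c p + smul c q"
  by (rule poly_mapping_eqI) (simp add: lookup_add algebra_simps)
lemma smul_add_left: "smul (a + b) p = smul a p + smul b p"
  by (rule poly_mapping_eqI) (simp add: lookup_add algebra_simps)
lemma smul_smul[simp]: "smul a (smul b p) = smul (a * b) p"
  by (rule poly_mapping_eqI) (simp add: algebra_simps)
lemma smul_one[simp]: "smul 1 p = p"
  by (rule poly_mapping_eqI) simp
lemma smul_zero_left[simp]: "smul 0 p = 0"
  by (rule poly_mapping_eqI) simp
lemma smul_zero_right[simp]: "smul c 0 = 0"
  by (rule poly_mapping_eqI) simp
lemma smul_neg[simp]: "smul c (- p) = - smul c p"
  by (rule poly_mapping_eqI) simp
lemma smul_diff[simp]: "smul c (p - q) = smul c p - smul c q"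
  by (rule poly_mapping_eqI) (simp add: lookup_minus algebra_simps)
lemma smul_neg_left: "smul (- c) p = - smul c p"
  by (rule poly_mapping_eqI) simp
lemma smul_sum: "smul c (sum f A) = (\<Sum>a\<in>A. smul c (f a))"
  by (rule poly_mapping_eqI) (simp add: lookup_sum sum_distrib_left)
lemma sum_smul: "smul (sum f A) p = (\<Sum>a\<in>A. smul (f a) p)"
  by (rule poly_mapping_eqI) (simp add: lookup_sum sum_distrib_right)
lemma smul_single[simp]: "smul c (Poly_Mapping.single s a) = Poly_Mapping.single s (c * a)"
  by (rule poly_mapping_eqI) (simp add: lookup_single when_def)

lemma single_smul: "Poly_Mapping.single s c = smul c (Poly_Mapping.single s 1)"
  by simp

lemma linext_superset:
  assumes "finite S" "Poly_Mapping.keys p \<subseteq> S"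
  shows "linext f p = (\<Sum>s\<in>S. smul (Poly_Mapping.lookup p s) (f s))"
  unfolding linext_def
  by (rule sum.mono_neutral_left) (use assms in \<open>auto simp: in_keys_iff\<close>)

lemma linext_add[simp]: "linext f (p + q) = linext f p + linext f q"
proof -
  let ?S = "Poly_Mapping.keys p \<union> Poly_Mapping.keys q \<union> Poly_Mapping.keys (p + q)"
  have "linext f (p + q) = (\<Sum>s\<in>?S. smul (Poly_Mapping.lookup (p+q) s) (f s))"
    by (rule linext_superset) auto
  also have "\<dots> = (\<Sum>s\<in>?S. smul (Poly_Mapping.lookup p s) (f s)) + (\<Sum>s\<in>?S. smul (Poly_Mapping.lookup q s) (f s))"
    by (simp add: lookup_add smul_add_left sum.distrib)
  also have "\<dots> = linext f p + linext f q"
    by (subst (1 2) linext_superset[symmetric]) auto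
  finally show ?thesis .
qed

lemma linext_zero[simp]: "linext f 0 = 0"
  by (simp add: linext_def)

lemma linext_single[simp]: "linext f (Poly_Mapping.single s c) = smul c (f s)"
  by (cases "c = 0") (simp_all add: linext_def)

lemma linext_smul[simp]: "linext f (smul c p) = smul c (linext f p)"
proof -
  have "linext f (smul c p) = (\<Sum>s\<in>Poly_Mapping.keys p. smul (Poly_Mapping.lookup (smul c p) s) (f s))"
    by (rule linext_superset) (auto simp: in_keys_iff)
  then show ?thesis by (simp add: linext_def smul_sum)
qed

lemma linext_neg[simp]: "linext f (- p) = - linext f p"
  using linext_add[of f p "-p"] by (simp add: eq_neg_iff_add_eq_0 add.commute)

lemma linext_diff[simp]: "linext f (p - q) = linext f p - linext f q"
  using linext_add[of f p "-q"] by simp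

lemma linext_sum[simp]: "linext f (sum g A) = (\<Sum>a\<in>A. linext f (g a))"
  by (induction A rule: infinite_finite_induct) auto

lemma linext_fun_add: "linext (\<lambda>s. f s + g s) p = linext f p + linext g p"
  by (simp add: linext_def sum.distrib)

lemma linext_fun_smul: "linext (\<lambda>s. smul c (f s)) p = smul c (linext f p)"
  by (simp add: linext_def smul_sum mult.commute)

lemma linext_fun_zero[simp]: "linext (\<lambda>s. 0) p = 0"
  by (simp add: linext_def)

lemma pm_expand: "p = (\<Sum>s\<in>Poly_Mapping.keys p. Poly_Mapping.single s (Poly_Mapping.lookup p s))"
  by (rule poly_mapping_eqI) (auto simp: lookup_sum lookup_single when_def in_keys_iff)

lemma linext_id[simp]: "linext (\<lambda>s. Poly_Mapping.single s 1) p = p"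
  by (subst (2) pm_expand) (simp add: linext_def)

definition addhom :: "(('a \<Rightarrow>\<^sub>0 'k::comm_ring_1) \<Rightarrow> ('c \<Rightarrow>\<^sub>0 'k)) \<Rightarrow> bool" where
  "addhom F \<longleftrightarrow> (\<forall>p q. F (p + q) = F p + F q) \<and> (\<forall>c p. F (smul c p) = smul c (F p))"

lemma addhom_linext: "addhom F \<Longrightarrow> F p = linext (\<lambda>s. F (Poly_Mapping.single s 1)) p"
proof -
  assume a: "addhom F"
  have add: "\<And>p q. F (p + q) = F p + F q" and hom: "\<And>c p. F (smul c p) = smul c (F p)"
    using a unfolding addhom_def by blast+
  have z: "F 0 = 0" using hom[of 0 0] by simp
  have sm: "F (sum g A) = (\<Sum>x\<in>A. F (g x))" if "finite A" for A and g :: "'x \<Rightarrow> _"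
    using that by (induction A rule: finite_induct) (simp_all add: z add)
  have "F p = F (\<Sum>s\<in>Poly_Mapping.keys p. Poly_Mapping.single s (Poly_Mapping.lookup p s))"
    by (rule arg_cong[where f=F]) (rule pm_expand)
  also have "\<dots> = (\<Sum>s\<in>Poly_Mapping.keys p. F (Poly_Mapping.single s (Poly_Mapping.lookup p s)))"
    by (rule sm) simp
  also have "\<dots> = (\<Sum>s\<in>Poly_Mapping.keys p. smul (Poly_Mapping.lookup p s) (F (Poly_Mapping.single s 1)))"
    by (rule sum.cong[OF refl]) (subst single_smul, rule hom)
  finally show ?thesis unfolding linext_def .
qed

lemma addhom_eqI:
  assumes "addhom F" "addhom G" "\<And>s. F (Poly_Mapping.single s 1) = G (Poly_Mapping.single s 1)"
  shows "F p = G p"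
  by (simp only: addhom_linext[OF assms(1), of p] addhom_linext[OF assms(2), of p] assms(3))

lemma addhom_linext_I[simp]: "addhom (linext f)"
  by (simp add: addhom_def)

lemma addhom_comp: "addhom F \<Longrightarrow> addhom G \<Longrightarrow> addhom (\<lambda>p. F (G p))"
  by (simp add: addhom_def)

lemma addhom_plus: "addhom F \<Longrightarrow> addhom G \<Longrightarrow> addhom (\<lambda>p. F p + G p)"
  by (simp add: addhom_def)

lemma bilin_linext: "bilin m p q = linext (\<lambda>u. linext (m u) q) p"
  by (simp add: bilin_def linext_def smul_sum mult.commute)

lemma bilin_add1[simp]: "bilin m (p + p') q = bilin m p q + bilin m p' q"
  by (simp add: bilin_linext)
lemma bilin_add2[simp]: "bilin m p (q + q') = bilin m p q + bilin m p q'"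
  by (simp add: bilin_linext linext_fun_add)
lemma bilin_smul1[simp]: "bilin m (smul c p) q = smul c (bilin m p q)"
  by (simp add: bilin_linext)
lemma bilin_smul2[simp]: "bilin m p (smul c q) = smul c (bilin m p q)"
  by (simp add: bilin_linext linext_fun_smul)
lemma bilin_zero1[simp]: "bilin m 0 q = 0"
  by (simp add: bilin_linext)
lemma bilin_zero2[simp]: "bilin m p 0 = 0"
  by (simp add: bilin_linext)
lemma bilin_neg1[simp]: "bilin m (- p) q = - bilin m p q"
  by (simp add: bilin_linext)
lemma bilin_neg2[simp]: "bilin m p (- q) = - bilin m p q"
  using bilin_add2[of m p q "-q"] by (simp add: eq_neg_iff_add_eq_0 add.commute)
lemma bilin_diff1[simp]: "bilin m (p - p') q = bilin m p q - bilin m p' q"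
  by (simp add: bilin_linext)
lemma bilin_diff2[simp]: "bilin m p (q - q') = bilin m p q - bilin m p q'"
  using bilin_add2[of m p q "-q'"] by simp
lemma bilin_sum1: "bilin m (sum f A) q = (\<Sum>a\<in>A. bilin m (f a) q)"
  by (simp add: bilin_linext)
lemma bilin_sum2: "bilin m p (sum f A) = (\<Sum>a\<in>A. bilin m p (f a))"
  by (induction A rule: infinite_finite_induct) auto
lemma bilin_single[simp]: "bilin m (Poly_Mapping.single s a) (Poly_Mapping.single t b) = smul (a * b) (m s t)"
  by (simp add: bilin_linext)

lemma addhom_bilin1[simp]: "addhom (\<lambda>p. bilin m p q)"
  by (simp add: addhom_def)
lemma addhom_bilin2[simp]: "addhom (\<lambda>q. bilin m p q)"
  by (simp add: addhom_def)


lemma alt_pascal: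
  fixes f :: "nat \<Rightarrow> 'a::comm_ring_1"
  shows "(\<Sum>J\<le>Suc N. (-1)^J * of_nat (Suc N choose J) * f J)
       = (\<Sum>J\<le>N. (-1)^J * of_nat (N choose J) * f J) - (\<Sum>J\<le>N. (-1)^J * of_nat (N choose J) * f (Suc J))"
proof -
  define h where "h J = (-1)^J * of_nat (N choose J) * f J" for J
  have hS: "h (Suc N) = 0" by (simp add: h_def binomial_eq_0)
  have e1: "(\<Sum>J\<le>N. h J) = h 0 + (\<Sum>J\<le>N. h (Suc J))"
  proof -
    have "(\<Sum>J\<le>N. h J) = (\<Sum>J\<le>Suc N. h J)" using hS by simp
    also have "\<dots> = h 0 + (\<Sum>J\<le>N. h (Suc J))" by (rule sum.atMost_Suc_shift)
    finally show ?thesis .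
  qed
  have "(\<Sum>J\<le>Suc N. (-1)^J * of_nat (Suc N choose J) * f J)
      = f 0 + (\<Sum>J\<le>N. (-1)^(Suc J) * of_nat (Suc N choose Suc J) * f (Suc J))"
    by (subst sum.atMost_Suc_shift) simp
  also have "\<dots> = f 0 + (\<Sum>J\<le>N. h (Suc J)) - (\<Sum>J\<le>N. (-1)^J * of_nat (N choose J) * f (Suc J))"
  proof -
    have "\<And>J. (-1)^(Suc J) * of_nat (Suc N choose Suc J) * f (Suc J) = h (Suc J) - (-1)^J * of_nat (N choose J) * f (Suc J)"
      by (simp add: h_def algebra_simps)
    then show ?thesis by (simp add: sum_subtractf)
  qed
  also have "\<dots> = (\<Sum>J\<le>N. h J) - (\<Sum>J\<le>N. (-1)^J * of_nat (N choose J) * f (Suc J))"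
    using e1 by (simp add: h_def)
  finally show ?thesis by (simp add: h_def)
qed

lemma alt_vdm:
  fixes f :: "nat \<Rightarrow> 'a::comm_ring_1"
  shows "(\<Sum>j\<le>A. (-1)^j * of_nat (A choose j) * (\<Sum>j'\<le>B. (-1)^j' * of_nat (B choose j') * f (j + j')))
       = (\<Sum>J\<le>A+B. (-1)^J * of_nat ((A+B) choose J) * f J)"
proof (induction A arbitrary: f)
  case 0
  then show ?case by simp
next
  case (Suc A)
  have "(\<Sum>j\<le>Suc A. (-1)^j * of_nat (Suc A choose j) * (\<Sum>j'\<le>B. (-1)^j' * of_nat (B choose j') * f (j + j')))
     = (\<Sum>j\<le>A. (-1)^j * of_nat (A choose j) * (\<Sum>j'\<le>B. (-1)^j' * of_nat (B choose j') * f (j + j')))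
     - (\<Sum>j\<le>A. (-1)^j * of_nat (A choose j) * (\<Sum>j'\<le>B. (-1)^j' * of_nat (B choose j') * f (Suc j + j')))"
    by (rule alt_pascal)
  also have "\<dots> = (\<Sum>J\<le>A+B. (-1)^J * of_nat ((A+B) choose J) * f J) - (\<Sum>J\<le>A+B. (-1)^J * of_nat ((A+B) choose J) * f (Suc J))"
    using Suc.IH[of f] Suc.IH[of "\<lambda>J. f (Suc J)"] by simp
  also have "\<dots> = (\<Sum>J\<le>Suc A+B. (-1)^J * of_nat ((Suc A+B) choose J) * f J)"
    using alt_pascal[of "A+B" f] by simp
  finally show ?case .
qed

lemma alt_pascal_pm:
  fixes F :: "nat \<Rightarrow> ('x \<Rightarrow>\<^sub>0 'a::comm_ring_1)"
  shows "(\<Sum>J\<le>Suc N. smul ((-1)^J * of_nat (Suc N choose J)) (F J))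
       = (\<Sum>J\<le>N. smul ((-1)^J * of_nat (N choose J)) (F J)) - (\<Sum>J\<le>N. smul ((-1)^J * of_nat (N choose J)) (F (Suc J)))"
  by (rule poly_mapping_eqI, simp only: lookup_sum lookup_minus lookup_smul, rule alt_pascal)

lemma alt_sum_zero: "(\<Sum>i\<le>q. (-1)^i * of_nat (q choose i)) = (if q = 0 then 1 else (0 :: 'a::comm_ring_1))"
  using choose_alternating_sum[of q] by auto


definition Pn :: "nat \<Rightarrow> int \<Rightarrow> nat \<Rightarrow> nat \<Rightarrow> nat \<Rightarrow> 'k::comm_ring_1 H" where
  "Pn w a b c q = (\<Sum>j\<le>q. Poly_Mapping.single (a + int w * int j, b, c) ((-1)^j * of_nat (q choose j)))"

lemma normalize_Pn: "normalize n w (a,b,c) = Pn w (a + int w * int (b div n)) (b mod n) (c mod n) (c div n)"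
  by (simp add: normalize_def Pn_def)

lemma lookup_Pn: "Poly_Mapping.lookup (Pn w a b c q) (x,y,z) =
   (if y = b \<and> z = c then (\<Sum>j\<le>q. (-1)^j * of_nat (q choose j) * (if x = a + int w * int j then 1 else 0)) else 0)"
  by (auto simp: Pn_def lookup_sum lookup_single when_def intro!: sum.cong)

lemma Pn_vdm: "(\<Sum>j\<le>q1. smul ((-1)^j * of_nat (q1 choose j)) (Pn w (a + int w * int j) b c q2)) = Pn w a b c (q1 + q2)"
proof (rule poly_mapping_eqI)
  fix k :: word
  obtain x y z where k: "k = (x,y,z)" by (cases k) auto
  define f :: "nat \<Rightarrow> 'a" where "f J = (if x = a + int w * int J then 1 else 0)" for J
  have e: "\<And>j j'. (if x = a + int w * int j + int w * int j' then 1 else 0) = f (j + j')"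
    by (simp add: f_def algebra_simps)
  have "Poly_Mapping.lookup (\<Sum>j\<le>q1. smul ((-1)^j * of_nat (q1 choose j)) (Pn w (a + int w * int j) b c q2)) k
      = (if y = b \<and> z = c then (\<Sum>j\<le>q1. (-1)^j * of_nat (q1 choose j) * (\<Sum>j'\<le>q2. (-1)^j' * of_nat (q2 choose j') * f (j + j'))) else 0)"
    unfolding k lookup_sum lookup_smul lookup_Pn e by (cases "y = b"; cases "z = c") simp_all
  also have "\<dots> = Poly_Mapping.lookup (Pn w a b c (q1 + q2)) k"
  proof -
    have fj: "\<And>J. (if x = a + int w * int J then 1 else 0) = f J" by (simp add: f_def)
    show ?thesis unfolding k lookup_Pn fj alt_vdm by simp
  qed
  finally show "Poly_Mapping.lookup (\<Sum>j\<le>q1. smul ((-1)^j * of_nat (q1 choose j)) (Pn w (a + int w * int j) b c q2 :: 'a H)) k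
      = Poly_Mapping.lookup (Pn w a b c (q1 + q2) :: 'a H) k" .
qed

lemma linext_Pn: "linext f (Pn w a b c q) = (\<Sum>j\<le>q. smul ((-1)^j * of_nat (q choose j)) (f (a + int w * int j, b, c)))"
  by (simp add: Pn_def)

lemma linext_comp: "linext g (linext f p) = linext (\<lambda>s. linext g (f s)) p"
proof -
  have "linext g (linext f p) = linext g (\<Sum>s\<in>Poly_Mapping.keys p. smul (Poly_Mapping.lookup p s) (f s))"
    by (simp only: linext_def[of f p])
  also have "\<dots> = (\<Sum>s\<in>Poly_Mapping.keys p. smul (Poly_Mapping.lookup p s) (linext g (f s)))"
    by simp
  also have "\<dots> = linext (\<lambda>s. linext g (f s)) p"
    by (simp only: linext_def[of "\<lambda>s. linext g (f s)" p])
  finally show ?thesis .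
qed

lemma div_split: "(n::nat) > 0 \<Longrightarrow> (B + b) div n = B div n + (B mod n + b) div n"
proof -
  assume n: "n > 0"
  have e: "B + b = (B mod n + b) + n * (B div n)"
    using div_mult_mod_eq[of B n] by (simp add: algebra_simps)
  show ?thesis
    by (subst e, subst div_mult_self2) (use n in simp_all)
qed

locale BH =
  fixes n w :: nat and \<gamma> :: "'k::field"
  assumes n_pos: "n > 0" and gn: "\<gamma> ^ n = 1" and prim: "\<forall>j. 0 < j \<and> j < n \<longrightarrow> \<gamma> ^ j \<noteq> 1"
begin

abbreviation M :: "'k H \<Rightarrow> 'k H \<Rightarrow> 'k H" where "M \<equiv> hmul n w \<gamma>"
abbreviation T :: "'k HH \<Rightarrow> 'k HH \<Rightarrow> 'k HH" where "T \<equiv> tmul n w \<gamma>"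
abbreviation nz :: "word \<Rightarrow> 'k H" where "nz \<equiv> normalize n w"
abbreviation bm :: "word \<Rightarrow> word \<Rightarrow> 'k H" where "bm \<equiv> basis_mult n w \<gamma>"
definition N :: "'k H \<Rightarrow> 'k H" where "N = linext nz"

lemma gpow_mod: "\<gamma> ^ k = \<gamma> ^ (k mod n)"
proof -
  have "\<gamma> ^ k = \<gamma> ^ (n * (k div n) + k mod n)" by simp
  also have "\<dots> = (\<gamma> ^ n) ^ (k div n) * \<gamma> ^ (k mod n)" by (simp only: power_add power_mult)
  finally show ?thesis by (simp add: gn)
qed

lemma gpow_mult_mod: "\<gamma> ^ (C * b) = \<gamma> ^ ((C mod n) * b)"
proof -
  have "\<gamma> ^ (C * b) = \<gamma> ^ ((C * b) mod n)" by (rule gpow_mod)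
  also have "(C * b) mod n = ((C mod n) * b) mod n" by (simp add: mod_mult_left_eq)
  also have "\<gamma> ^ (((C mod n) * b) mod n) = \<gamma> ^ ((C mod n) * b)" by (rule gpow_mod[symmetric])
  finally show ?thesis .
qed

lemma gpow_mult_mod2: "\<gamma> ^ (c * B) = \<gamma> ^ (c * (B mod n))"
  using gpow_mult_mod[of B c] by (simp add: mult.commute)

lemma bm_eq: "bm (a,b,c) (a',b',c') = smul (\<gamma>^(c*b')) (nz (a+a', b+b', c+c'))"
  by (simp add: basis_mult_def)

lemma nz_small: "b < n \<Longrightarrow> c < n \<Longrightarrow> nz (a,b,c) = Poly_Mapping.single (a,b,c) 1"
  by (simp add: normalize_def)

lemma absG:
  "linext (\<lambda>(x,y,z). smul (\<phi> z y) (nz (x + a', y + b', z + c'))) (nz (A,B,C))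
   = smul (\<phi> (C mod n) (B mod n)) (nz (A + a', B + b', C + c'))"
proof -
  define A1 where "A1 = A + int w * int (B div n)"
  define B1 where "B1 = B mod n"
  define C1 where "C1 = C mod n"
  define Q where "Q = C div n"
  define A2 where "A2 = A1 + a' + int w * int ((B1 + b') div n)"
  have e1: "\<And>j. nz (A1 + int w * int j + a', B1 + b', C1 + c')
      = Pn w (A2 + int w * int j) ((B1 + b') mod n) ((C1 + c') mod n) ((C1 + c') div n)"
    by (simp add: normalize_Pn A2_def algebra_simps)
  have "linext (\<lambda>(x,y,z). smul (\<phi> z y) (nz (x + a', y + b', z + c'))) (nz (A,B,C))
     = (\<Sum>j\<le>Q. smul ((-1)^j * of_nat (Q choose j)) (smul (\<phi> C1 B1) (nz (A1 + int w * int j + a', B1 + b', C1 + c'))))"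
    by (simp add: normalize_Pn linext_Pn A1_def B1_def C1_def Q_def)
  also have "\<dots> = (\<Sum>j\<le>Q. smul ((-1)^j * of_nat (Q choose j)) (smul (\<phi> C1 B1) (Pn w (A2 + int w * int j) ((B1 + b') mod n) ((C1 + c') mod n) ((C1 + c') div n))))"
    by (simp only: e1)
  also have "\<dots> = smul (\<phi> C1 B1) (\<Sum>j\<le>Q. smul ((-1)^j * of_nat (Q choose j)) (Pn w (A2 + int w * int j) ((B1 + b') mod n) ((C1 + c') mod n) ((C1 + c') div n)))"
    by (simp add: smul_sum mult.commute)
  also have "\<dots> = smul (\<phi> C1 B1) (Pn w A2 ((B1 + b') mod n) ((C1 + c') mod n) (Q + (C1 + c') div n))"
    by (simp add: Pn_vdm)
  also have "Pn w A2 ((B1 + b') mod n) ((C1 + c') mod n) (Q + (C1 + c') div n) = nz (A + a', B + b', C + c')"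
  proof -
    have "(B + b') div n = B div n + (B1 + b') div n" "(C + c') div n = Q + (C1 + c') div n"
      using div_split[OF n_pos, of B b'] div_split[OF n_pos, of C c'] unfolding B1_def C1_def Q_def by simp_all
    moreover have "(B + b') mod n = (B1 + b') mod n" "(C + c') mod n = (C1 + c') mod n"
      by (simp_all add: B1_def C1_def mod_add_left_eq)
    ultimately show ?thesis by (simp add: normalize_Pn A2_def A1_def algebra_simps)
  qed
  finally show ?thesis by (simp add: B1_def C1_def)
qed

lemma absR: "linext (\<lambda>s. bm s (a',b',c')) (nz (A,B,C)) = smul (\<gamma>^(C*b')) (nz (A+a', B+b', C+c'))"
proof -
  have "(\<lambda>s. bm s (a',b',c')) = (\<lambda>(x,y,z). smul (\<gamma>^(z*b')) (nz (x + a', y + b', z + c')))"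
    by (auto simp: bm_eq)
  then show ?thesis using absG[of "\<lambda>z y. \<gamma>^(z*b')"] gpow_mult_mod[of C b', symmetric] by simp
qed

lemma absL: "linext (\<lambda>s. bm (a',b',c') s) (nz (A,B,C)) = smul (\<gamma>^(c'*B)) (nz (a'+A, b'+B, c'+C))"
proof -
  have "(\<lambda>s. bm (a',b',c') s) = (\<lambda>(x,y,z). smul (\<gamma>^(c'*y)) (nz (x + a', y + b', z + c')))"
    by (auto simp: bm_eq algebra_simps)
  then show ?thesis using absG[of "\<lambda>z y. \<gamma>^(c'*y)" a' b' c' A B C] gpow_mult_mod2[of c' B, symmetric]
    by (simp add: algebra_simps)
qed

lemma nz_nz: "N (nz v) = nz v"
proof -
  obtain a b c where v: "v = (a,b,c)" by (cases v) auto
  have "N (nz v) = (\<Sum>j\<le>c div n. smul ((-1)^j * of_nat ((c div n) choose j))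
        (nz (a + int w * int (b div n) + int w * int j, b mod n, c mod n)))"
    by (simp add: N_def v normalize_Pn linext_Pn)
  also have "\<dots> = nz v"
    using n_pos by (simp add: nz_small v normalize_Pn Pn_def)
  finally show ?thesis .
qed

lemma M_single: "M (Poly_Mapping.single s a) (Poly_Mapping.single t b) = smul (a*b) (bm s t)"
  by (simp add: hmul_def)
lemma M_single_left: "M (Poly_Mapping.single s 1) q = linext (bm s) q"
  by (simp add: hmul_def bilin_linext)
lemma M_single_right: "M p (Poly_Mapping.single t 1) = linext (\<lambda>s. bm s t) p"
  by (simp add: hmul_def bilin_linext)

lemma M_add1[simp]: "M (p + p') q = M p q + M p' q" by (simp add: hmul_def)
lemma M_add2[simp]: "M p (q + q') = M p q + M p q'" by (simp add: hmul_def)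
lemma M_smul1[simp]: "M (smul c p) q = smul c (M p q)" by (simp add: hmul_def)
lemma M_smul2[simp]: "M p (smul c q) = smul c (M p q)" by (simp add: hmul_def)
lemma M_zero1[simp]: "M 0 q = 0" by (simp add: hmul_def)
lemma M_zero2[simp]: "M p 0 = 0" by (simp add: hmul_def)
lemma M_neg1[simp]: "M (- p) q = - M p q" by (simp add: hmul_def)
lemma M_neg2[simp]: "M p (- q) = - M p q" by (simp add: hmul_def)
lemma M_diff1[simp]: "M (p - p') q = M p q - M p' q" by (simp add: hmul_def)
lemma M_diff2[simp]: "M p (q - q') = M p q - M p q'" by (simp add: hmul_def)
lemma M_sum1: "M (sum f A) q = (\<Sum>a\<in>A. M (f a) q)" by (simp add: hmul_def bilin_sum1)
lemma M_sum2: "M p (sum f A) = (\<Sum>a\<in>A. M p (f a))" by (simp add: hmul_def bilin_sum2)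
lemma addhom_M1[simp]: "addhom (\<lambda>p. M p q)" by (simp add: hmul_def)
lemma addhom_M2[simp]: "addhom (\<lambda>q. M p q)" by (simp add: hmul_def)

lemma M_assoc_words: "M (M (Poly_Mapping.single s 1) (Poly_Mapping.single t 1)) (Poly_Mapping.single u 1)
   = M (Poly_Mapping.single s 1) (M (Poly_Mapping.single t 1) (Poly_Mapping.single u 1))"
proof -
  obtain a b c where s: "s = (a,b,c)" by (cases s) auto
  obtain a' b' c' where t: "t = (a',b',c')" by (cases t) auto
  obtain a'' b'' c'' where u: "u = (a'',b'',c'')" by (cases u) auto
  have "M (M (Poly_Mapping.single s 1) (Poly_Mapping.single t 1)) (Poly_Mapping.single u 1)
     = smul (\<gamma>^(c*b') * \<gamma>^((c+c')*b'')) (nz (a+a'+a'', b+b'+b'', c+c'+c''))"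
    by (simp add: M_single M_single_right s t u bm_eq absR)
  also have "\<dots> = smul (\<gamma>^(c'*b'') * \<gamma>^(c*(b'+b''))) (nz (a+(a'+a''), b+(b'+b''), c+(c'+c'')))"
    by (simp add: algebra_simps power_add)
  also have "\<dots> = M (Poly_Mapping.single s 1) (M (Poly_Mapping.single t 1) (Poly_Mapping.single u 1))"
    by (simp add: M_single M_single_left s t u bm_eq absL)
  finally show ?thesis .
qed

lemma M_assoc: "M (M p q) r = M p (M q r)"
proof -
  have A: "M (M (Poly_Mapping.single s 1) (Poly_Mapping.single t 1)) r
      = M (Poly_Mapping.single s 1) (M (Poly_Mapping.single t 1) r)" for s t
    by (rule addhom_eqI[where F="\<lambda>r. M (M (Poly_Mapping.single s 1) (Poly_Mapping.single t 1)) r"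
          and G="\<lambda>r. M (Poly_Mapping.single s 1) (M (Poly_Mapping.single t 1) r)"])
       (simp_all add: addhom_def M_assoc_words)
  have B: "M (M (Poly_Mapping.single s 1) q) r = M (Poly_Mapping.single s 1) (M q r)" for s
    by (rule addhom_eqI[where F="\<lambda>q. M (M (Poly_Mapping.single s 1) q) r"
          and G="\<lambda>q. M (Poly_Mapping.single s 1) (M q r)"])
       (simp_all add: addhom_def A)
  show ?thesis
    by (rule addhom_eqI[where F="\<lambda>p. M (M p q) r" and G="\<lambda>p. M p (M q r)"])
       (simp_all add: addhom_def B)
qed

lemma bm_zero_left: "bm (0,0,0) = nz"
  by (auto simp: bm_eq)
lemma bm_zero_right: "(\<lambda>s. bm s (0,0,0)) = nz"
  by (auto simp: bm_eq)

lemma M_one_left: "M Hone p = N p"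
  by (simp add: Hone_def M_single_left bm_zero_left N_def)
lemma M_one_right: "M p Hone = N p"
  by (simp add: Hone_def M_single_right bm_zero_right N_def)

lemma N_bm: "N (bm s t) = bm s t"
proof -
  obtain a b c where s: "s = (a,b,c)" by (cases s) auto
  obtain a' b' c' where t: "t = (a',b',c')" by (cases t) auto
  show ?thesis by (simp add: s t bm_eq N_def nz_nz[unfolded N_def])
qed

lemma N_M: "N (M p q) = M p q"
  by (simp add: hmul_def bilin_linext N_def linext_comp N_bm[unfolded N_def])

lemma M_N1: "M (N p) q = M p q"
  by (metis M_assoc M_one_left N_M)
lemma M_N2: "M p (N q) = M p q"
  by (metis M_assoc M_one_right N_M)

lemma N_add[simp]: "N (p + q) = N p + N q" by (simp add: N_def)
lemma N_smul[simp]: "N (smul c p) = smul c (N p)" by (simp add: N_def)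
lemma N_single: "N (Poly_Mapping.single s c) = smul c (nz s)" by (simp add: N_def)

end


lemma tens_single: "tens (Poly_Mapping.single s a) (Poly_Mapping.single t b) = Poly_Mapping.single (s,t) (a*b)"
  by (simp add: tens_def)
lemma tens_add1[simp]: "tens (p + p') q = tens p q + tens p' q" by (simp add: tens_def)
lemma tens_add2[simp]: "tens p (q + q') = tens p q + tens p q'" by (simp add: tens_def)
lemma tens_smul1[simp]: "tens (smul c p) q = smul c (tens p q)" by (simp add: tens_def)
lemma tens_smul2[simp]: "tens p (smul c q) = smul c (tens p q)" by (simp add: tens_def)
lemma tens_zero1[simp]: "tens 0 q = 0" by (simp add: tens_def)
lemma tens_zero2[simp]: "tens p 0 = 0" by (simp add: tens_def)
lemma tens_neg1[simp]: "tens (- p) q = - tens p q" by (simp add: tens_def)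
lemma tens_neg2[simp]: "tens p (- q) = - tens p q" by (simp add: tens_def)
lemma tens_diff1[simp]: "tens (p - p') q = tens p q - tens p' q" by (simp add: tens_def)
lemma tens_diff2[simp]: "tens p (q - q') = tens p q - tens p q'" by (simp add: tens_def)
lemma tens_sum1: "tens (sum f A) q = (\<Sum>a\<in>A. tens (f a) q)" by (simp add: tens_def bilin_sum1)
lemma tens_sum2: "tens p (sum f A) = (\<Sum>a\<in>A. tens p (f a))" by (simp add: tens_def bilin_sum2)

lemma single_pair: "Poly_Mapping.single ((s::word),(t::word)) (1::'k::comm_ring_1) = tens (Poly_Mapping.single s 1) (Poly_Mapping.single t 1)"
  by (simp add: tens_single)

context BH
begin

lemma T_add1[simp]: "T (p + p') q = T p q + T p' q" by (simp add: tmul_def)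
lemma T_add2[simp]: "T p (q + q') = T p q + T p q'" by (simp add: tmul_def)
lemma T_smul1[simp]: "T (smul c p) q = smul c (T p q)" by (simp add: tmul_def)
lemma T_smul2[simp]: "T p (smul c q) = smul c (T p q)" by (simp add: tmul_def)
lemma T_zero1[simp]: "T 0 q = 0" by (simp add: tmul_def)
lemma T_zero2[simp]: "T p 0 = 0" by (simp add: tmul_def)
lemma T_neg1[simp]: "T (- p) q = - T p q" by (simp add: tmul_def)
lemma T_neg2[simp]: "T p (- q) = - T p q" by (simp add: tmul_def)
lemma T_diff1[simp]: "T (p - p') q = T p q - T p' q" by (simp add: tmul_def)
lemma T_diff2[simp]: "T p (q - q') = T p q - T p q'" by (simp add: tmul_def)
lemma T_sum1: "T (sum f A) q = (\<Sum>a\<in>A. T (f a) q)" by (simp add: tmul_def bilin_sum1)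
lemma T_sum2: "T p (sum f A) = (\<Sum>a\<in>A. T p (f a))" by (simp add: tmul_def bilin_sum2)

lemma T_single: "T (Poly_Mapping.single (s,t) a) (Poly_Mapping.single (s',t') b) = smul (a*b) (tens (bm s s') (bm t t'))"
  by (simp add: tmul_def)

lemma TT: "T (tens a b) (tens c d) = tens (M a c) (M b d)"
proof -
  have A: "T (tens (Poly_Mapping.single s 1) (Poly_Mapping.single t 1)) (tens (Poly_Mapping.single s' 1) d)
     = tens (M (Poly_Mapping.single s 1) (Poly_Mapping.single s' 1)) (M (Poly_Mapping.single t 1) d)" for s t s'
    by (rule addhom_eqI[where F="\<lambda>d. T (tens (Poly_Mapping.single s 1) (Poly_Mapping.single t 1)) (tens (Poly_Mapping.single s' 1) d)"
          and G="\<lambda>d. tens (M (Poly_Mapping.single s 1) (Poly_Mapping.single s' 1)) (M (Poly_Mapping.single t 1) d)"])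
       (simp_all add: addhom_def tens_single T_single M_single)
  have B: "T (tens (Poly_Mapping.single s 1) (Poly_Mapping.single t 1)) (tens c d)
     = tens (M (Poly_Mapping.single s 1) c) (M (Poly_Mapping.single t 1) d)" for s t
    by (rule addhom_eqI[where F="\<lambda>c. T (tens (Poly_Mapping.single s 1) (Poly_Mapping.single t 1)) (tens c d)"
          and G="\<lambda>c. tens (M (Poly_Mapping.single s 1) c) (M (Poly_Mapping.single t 1) d)"])
       (simp_all add: addhom_def A)
  have C: "T (tens (Poly_Mapping.single s 1) b) (tens c d) = tens (M (Poly_Mapping.single s 1) c) (M b d)" for s
    by (rule addhom_eqI[where F="\<lambda>b. T (tens (Poly_Mapping.single s 1) b) (tens c d)"
          and G="\<lambda>b. tens (M (Poly_Mapping.single s 1) c) (M b d)"])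
       (simp_all add: addhom_def B)
  show ?thesis
    by (rule addhom_eqI[where F="\<lambda>a. T (tens a b) (tens c d)" and G="\<lambda>a. tens (M a c) (M b d)"])
       (simp_all add: addhom_def C)
qed

lemma T_assoc: "T (T X Y) Z = T X (T Y Z)"
proof -
  have A: "T (T (Poly_Mapping.single k 1) (Poly_Mapping.single k' 1)) (Poly_Mapping.single k'' 1)
      = T (Poly_Mapping.single k 1) (T (Poly_Mapping.single k' 1) (Poly_Mapping.single k'' 1))" for k k' k''
    by (cases k; cases k'; cases k'') (simp only: single_pair TT M_assoc)
  have B: "T (T (Poly_Mapping.single k 1) (Poly_Mapping.single k' 1)) Z
      = T (Poly_Mapping.single k 1) (T (Poly_Mapping.single k' 1) Z)" for k k'
    by (rule addhom_eqI[where F="\<lambda>Z. T (T (Poly_Mapping.single k 1) (Poly_Mapping.single k' 1)) Z"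
          and G="\<lambda>Z. T (Poly_Mapping.single k 1) (T (Poly_Mapping.single k' 1) Z)"])
       (simp_all add: addhom_def A)
  have C: "T (T (Poly_Mapping.single k 1) Y) Z = T (Poly_Mapping.single k 1) (T Y Z)" for k
    by (rule addhom_eqI[where F="\<lambda>Y. T (T (Poly_Mapping.single k 1) Y) Z"
          and G="\<lambda>Y. T (Poly_Mapping.single k 1) (T Y Z)"])
       (simp_all add: addhom_def B)
  show ?thesis
    by (rule addhom_eqI[where F="\<lambda>X. T (T X Y) Z" and G="\<lambda>X. T X (T Y Z)"])
       (simp_all add: addhom_def C)
qed

abbreviation E :: "'k HH" where "E \<equiv> tens Hone Hone"

lemma N_Hone: "N Hone = Hone"
  using n_pos by (simp add: Hone_def N_single nz_small)

lemma TE_left: "T E (tens a b) = tens (N a) (N b)"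
  by (simp add: TT M_one_left)
lemma TE_right: "T (tens a b) E = tens (N a) (N b)"
  by (simp add: TT M_one_right)

lemma T_N1: "T (tens (N a) (N b)) Y = T (tens a b) Y"
proof -
  have "T (tens (N a) (N b)) (Poly_Mapping.single k 1) = T (tens a b) (Poly_Mapping.single k 1)" for k
    by (cases k) (simp only: single_pair TT M_N1)
  note h = this
  show ?thesis
    by (rule addhom_eqI[where F="\<lambda>Y. T (tens (N a) (N b)) Y" and G="\<lambda>Y. T (tens a b) Y"])
       (simp_all add: addhom_def h)
qed

lemma T_N2: "T X (tens (N c) (N d)) = T X (tens c d)"
proof -
  have "T (Poly_Mapping.single k 1) (tens (N c) (N d)) = T (Poly_Mapping.single k 1) (tens c d)" for k
    by (cases k) (simp only: single_pair TT M_N2)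
  note h = this
  show ?thesis
    by (rule addhom_eqI[where F="\<lambda>X. T X (tens (N c) (N d))" and G="\<lambda>X. T X (tens c d)"])
       (simp_all add: addhom_def h)
qed

lemma T_E_left: "T (T E X) Y = T X Y"
proof -
  have "T (T E (Poly_Mapping.single k 1)) Y = T (Poly_Mapping.single k 1) Y" for k
    by (cases k) (simp only: single_pair TE_left T_N1)
  note h = this
  show ?thesis
    by (rule addhom_eqI[where F="\<lambda>X. T (T E X) Y" and G="\<lambda>X. T X Y"]) (simp_all add: addhom_def h)
qed

lemma T_E_mid: "T (T X E) Y = T X Y"
proof -
  have "T (T (Poly_Mapping.single k 1) E) Y = T (Poly_Mapping.single k 1) Y" for k
    by (cases k) (simp only: single_pair TE_right T_N1)
  note h = this
  show ?thesis
    by (rule addhom_eqI[where F="\<lambda>X. T (T X E) Y" and G="\<lambda>X. T X Y"]) (simp_all add: addhom_def h)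
qed

lemma T_E_right: "T X (T Y E) = T X Y"
proof -
  have "T X (T (Poly_Mapping.single k 1) E) = T X (Poly_Mapping.single k 1)" for k
    by (cases k) (simp only: single_pair TE_right T_N2)
  note h = this
  show ?thesis
    by (rule addhom_eqI[where F="\<lambda>Y. T X (T Y E)" and G="\<lambda>Y. T X Y"]) (simp_all add: addhom_def h)
qed

lemma T_E_mid2: "T X (T E Y) = T X Y"
  by (metis T_assoc T_E_mid)

lemma T_prod_E: "T (T X Y) E = T X Y"
  by (simp add: T_assoc T_E_right)

lemma T_E_prod: "T E (T X Y) = T X Y"
  by (simp add: T_assoc[symmetric] T_E_left)

lemma T_E_E: "T E E = E"
  by (simp add: TE_left N_Hone)

end


fun qb :: "'k::comm_ring_1 \<Rightarrow> nat \<Rightarrow> nat \<Rightarrow> 'k" where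
  "qb q d 0 = 1"
| "qb q 0 (Suc j) = 0"
| "qb q (Suc d) (Suc j) = qb q d (Suc j) + q^(d-j) * qb q d j"

lemma qb_zero: "d < j \<Longrightarrow> qb q d j = 0"
proof (induction d arbitrary: j)
  case 0 then show ?case by (cases j) auto
next
  case (Suc d) then show ?case by (cases j) auto
qed

lemma qb_prod: "j \<le> d \<Longrightarrow> qb q d j * (\<Prod>i\<in>{1..j}. (q^i - 1)) = (\<Prod>i<j. (q^(d-i) - 1))"
proof (induction d arbitrary: j)
  case 0 then show ?case by simp
next
  case (Suc d)
  show ?case
  proof (cases j)
    case 0 then show ?thesis by simp
  next
    case (Suc j')
    have jd: "j' \<le> d" using Suc.prems Suc by simp
    define D where "D = (\<Prod>i\<in>{1..j'}. (q^i - 1))"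
    define P where "P = (\<Prod>i<j'. (q^(d-i) - 1))"
    have D1: "(\<Prod>i\<in>{1..Suc j'}. (q^i - 1)) = D * (q^(Suc j') - 1)"
      by (simp add: D_def prod.cl_ivl_Suc)
    have t1: "qb q d (Suc j') * (D * (q^(Suc j') - 1)) = P * (q^(d-j') - 1)"
    proof (cases "Suc j' \<le> d")
      case True
      have "qb q d (Suc j') * (D * (q^(Suc j') - 1)) = (\<Prod>i<Suc j'. (q^(d-i) - 1))"
        using Suc.IH[OF True] D1 by simp
      then show ?thesis by (simp add: P_def)
    next
      case False
      then have "j' = d" using jd by simp
      then show ?thesis by (simp add: qb_zero)
    qed
    have t2: "qb q d j' * D = P" using Suc.IH[OF jd] by (simp add: D_def P_def)
    have "qb q (Suc d) j * (\<Prod>i\<in>{1..j}. (q^i - 1))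
        = qb q d (Suc j') * (D * (q^(Suc j') - 1)) + q^(d-j') * (qb q d j' * D) * (q^(Suc j') - 1)"
      by (simp only: Suc qb.simps D1) (simp add: algebra_simps)
    also have "\<dots> = P * ((q^(d-j') - 1) + q^(d-j') * (q^(Suc j') - 1))"
      unfolding t1 t2 by (simp add: algebra_simps)
    also have "q^(d-j') * q^(Suc j') = q^(Suc d)"
      using jd by (simp add: power_add[symmetric] del: power_Suc)
    then have "(q^(d-j') - 1) + q^(d-j') * (q^(Suc j') - 1) = q^(Suc d) - 1"
      by (simp add: algebra_simps)
    also have "P * (q^(Suc d) - 1) = (\<Prod>i<j. (q^(Suc d-i) - 1))"
      by (simp only: Suc P_def prod.lessThan_Suc_shift) (simp add: mult.commute)
    finally show ?thesis .
  qed
qed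

lemma qb_diag: "qb q d d = 1"
  by (induction d) (simp_all add: qb_zero)

context BH
begin

lemma qb_root: "0 < j \<Longrightarrow> j < n \<Longrightarrow> qb \<gamma> n j = 0"
proof -
  assume j: "0 < j" "j < n"
  have "qb \<gamma> n j * (\<Prod>i\<in>{1..j}. (\<gamma>^i - 1)) = (\<Prod>i<j. (\<gamma>^(n-i) - 1))"
    using j by (intro qb_prod) simp
  also have "\<dots> = 0"
    using j gn by (auto simp: prod_zero_iff intro!: bexI[where x=0])
  finally have "qb \<gamma> n j * (\<Prod>i\<in>{1..j}. (\<gamma>^i - 1)) = 0" .
  moreover have "(\<Prod>i\<in>{1..j}. (\<gamma>^i - 1)) \<noteq> 0"
    using j prim by (auto simp: prod_zero_iff)
  ultimately show ?thesis by simp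
qed

abbreviation Dy :: "'k HH" where "Dy \<equiv> Delta_y"
definition Dp :: "nat \<Rightarrow> 'k HH" where "Dp c = (T Dy ^^ c) E"
abbreviation xw :: "int \<Rightarrow> nat \<Rightarrow> 'k H" where "xw a b \<equiv> Poly_Mapping.single (a,b,0) 1"
abbreviation G :: "int \<Rightarrow> nat \<Rightarrow> 'k HH" where "G a b \<equiv> tens (xw a b) (xw a b)"
abbreviation Db :: "word \<Rightarrow> 'k HH" where "Db \<equiv> Delta_basis n w \<gamma>"
abbreviation Del :: "'k H \<Rightarrow> 'k HH" where "Del \<equiv> Delta n w \<gamma>"

lemma Db_eq: "Db (a,b,c) = T (G a b) (Dp c)"
  by (simp add: Delta_basis_def Dp_def single_pair)

lemma Dp_0: "Dp 0 = E" by (simp add: Dp_def)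
lemma Dp_Suc: "Dp (Suc c) = T Dy (Dp c)" by (simp add: Dp_def)

lemma Dy_E: "T Dy E = T E Dy"
  by (simp add: Delta_y_def TT M_one_left M_one_right)

lemma Dp_Suc_right: "Dp (Suc c) = T (Dp c) Dy"
proof (induction c)
  case 0 then show ?case by (simp add: Dp_Suc Dp_0 Dy_E)
next
  case (Suc c)
  have "Dp (Suc (Suc c)) = T Dy (T (Dp c) Dy)" using Suc by (simp add: Dp_Suc)
  also have "\<dots> = T (Dp (Suc c)) Dy" by (simp add: T_assoc Dp_Suc)
  finally show ?case .
qed

lemma Dp_E: "T E (Dp c) = Dp c"
  by (cases c) (simp_all add: Dp_0 Dp_Suc T_E_E T_E_prod)

lemma Dp_add: "T (Dp c) (Dp d) = Dp (c + d)"
  by (induction c) (simp_all add: Dp_0 Dp_E Dp_Suc T_assoc)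

lemma M_nz_single: "M (nz (A,B,C)) (Poly_Mapping.single (a',b',c') 1) = smul (\<gamma>^(C*b')) (nz (A+a', B+b', C+c'))"
  by (simp add: M_single_right absR)

lemma M_single_nz: "M (Poly_Mapping.single (a',b',c') 1) (nz (A,B,C)) = smul (\<gamma>^(c'*B)) (nz (a'+A, b'+B, c'+C))"
  by (simp add: M_single_left absL)

lemma nz_c0: "nz (a,b,0) = xw (a + int w * int (b div n)) (b mod n)"
  using n_pos by (simp add: normalize_def)

lemma Dy_G: "T Dy (G a b) = smul (\<gamma>^b) (T (G a b) Dy)"
  by (simp add: Delta_y_def TT Hy_def Hg_def Hone_def M_single bm_eq add.commute)

lemma Dp_G: "T (Dp c) (T (G a b) X) = smul (\<gamma>^(c*b)) (T (G a b) (T (Dp c) X))"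
proof (induction c arbitrary: X)
  case 0 then show ?case by (simp add: Dp_0 T_E_prod T_E_mid2)
next
  case (Suc c)
  have "T (Dp (Suc c)) (T (G a b) X) = T Dy (T (Dp c) (T (G a b) X))" by (simp add: Dp_Suc T_assoc)
  also have "\<dots> = smul (\<gamma>^(c*b)) (T (T Dy (G a b)) (T (Dp c) X))" by (simp add: Suc T_assoc)
  also have "\<dots> = smul (\<gamma>^(c*b) * \<gamma>^b) (T (G a b) (T Dy (T (Dp c) X)))" by (simp add: Dy_G T_assoc)
  also have "\<dots> = smul (\<gamma>^(Suc c * b)) (T (G a b) (T (Dp (Suc c)) X))"
    by (simp add: Dp_Suc T_assoc power_add mult.commute)
  finally show ?case .
qed

lemma T_G_nz: "T (tens (nz v) (nz v)) X = T (tens (Poly_Mapping.single v 1) (Poly_Mapping.single v 1)) X"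
  using T_N1[of "Poly_Mapping.single v 1" "Poly_Mapping.single v 1" X] by (simp add: N_single)

lemma G_norm: "T (G a b) X = T (G (a + int w * int (b div n)) (b mod n)) X"
  using T_G_nz[of "(a,b,0)" X] by (simp add: nz_c0)


lemma nz_000: "nz (0,0,0) = Hone"
  using n_pos by (simp add: nz_small Hone_def)

lemma Dp_formula: "Dp d = (\<Sum>j\<le>d. smul (qb \<gamma> d j) (tens (nz (0,0,j)) (nz (0,j,d-j))))"
proof (induction d)
  case 0 then show ?case by (simp add: Dp_0 nz_000)
next
  case (Suc d)
  define X where "X J = tens (nz (0,0,J)) (nz (0,J,Suc d - J))" for J
  have step: "T (tens (nz (0,0,j)) (nz (0,j,d-j))) Dy = smul (\<gamma>^(d-j)) (X (Suc j)) + X j" if "j \<le> d" for j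
    using that by (simp add: Delta_y_def TT Hy_def Hg_def Hone_def M_nz_single X_def Suc_diff_le add.commute)
  have "Dp (Suc d) = (\<Sum>j\<le>d. smul (qb \<gamma> d j) (T (tens (nz (0,0,j)) (nz (0,j,d-j))) Dy))"
    by (simp add: Dp_Suc_right Suc.IH T_sum1)
  also have "\<dots> = (\<Sum>j\<le>d. smul (qb \<gamma> d j * \<gamma>^(d-j)) (X (Suc j)) + smul (qb \<gamma> d j) (X j))"
    by (rule sum.cong[OF refl]) (simp add: step)
  also have "\<dots> = (\<Sum>j\<le>d. smul (qb \<gamma> d j * \<gamma>^(d-j)) (X (Suc j))) + (\<Sum>j\<le>d. smul (qb \<gamma> d j) (X j))"
    by (rule sum.distrib)
  also have "(\<Sum>j\<le>d. smul (qb \<gamma> d j) (X j)) = X 0 + (\<Sum>j\<le>d. smul (qb \<gamma> d (Suc j)) (X (Suc j)))"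
  proof -
    have "(\<Sum>j\<le>d. smul (qb \<gamma> d j) (X j)) = (\<Sum>j\<le>Suc d. smul (qb \<gamma> d j) (X j))"
      by (simp add: qb_zero)
    also have "\<dots> = X 0 + (\<Sum>j\<le>d. smul (qb \<gamma> d (Suc j)) (X (Suc j)))"
      by (subst sum.atMost_Suc_shift) simp
    finally show ?thesis .
  qed
  also have "(\<Sum>j\<le>d. smul (qb \<gamma> d j * \<gamma>^(d-j)) (X (Suc j))) + (X 0 + (\<Sum>j\<le>d. smul (qb \<gamma> d (Suc j)) (X (Suc j))))
      = X 0 + (\<Sum>j\<le>d. smul (qb \<gamma> (Suc d) (Suc j)) (X (Suc j)))"
    by (simp add: sum.distrib[symmetric] smul_add_left[symmetric] algebra_simps)
  also have "\<dots> = (\<Sum>j\<le>Suc d. smul (qb \<gamma> (Suc d) j) (X j))"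
    by (simp only: sum.atMost_Suc_shift) simp
  finally show ?case by (simp add: X_def)
qed

lemma nz_00n: "nz (0,0,n) = Hone - xw (int w) 0"
  using n_pos by (simp add: normalize_def Hone_def single_uminus)

lemma nz_0n0: "nz (0,n,0) = xw (int w) 0"
  using n_pos by (simp add: nz_c0)

lemma Dp_n: "Dp n = E - G (int w) 0"
proof -
  have "Dp n = (\<Sum>j\<in>{0,n}. smul (qb \<gamma> n j) (tens (nz (0,0,j)) (nz (0,j,n-j))))"
    unfolding Dp_formula by (rule sum.mono_neutral_right) (auto simp: qb_root)
  also have "\<dots> = tens Hone (Hone - xw (int w) 0) + tens (Hone - xw (int w) 0) (xw (int w) 0)"
    using n_pos by (simp add: qb_diag nz_000 nz_00n nz_0n0)
  also have "\<dots> = E - G (int w) 0" by simp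
  finally show ?thesis .
qed

lemma Del_single: "Del (Poly_Mapping.single s c) = smul c (Db s)"
  by (simp add: Delta_def)
lemma Del_add[simp]: "Del (p + q) = Del p + Del q" by (simp add: Delta_def)
lemma Del_smul[simp]: "Del (smul c p) = smul c (Del p)" by (simp add: Delta_def)
lemma Del_zero[simp]: "Del 0 = 0" by (simp add: Delta_def)
lemma Del_neg[simp]: "Del (- p) = - Del p" by (simp add: Delta_def)
lemma Del_diff[simp]: "Del (p - q) = Del p - Del q" by (simp add: Delta_def)
lemma Del_sum: "Del (sum f A) = (\<Sum>a\<in>A. Del (f a))" by (simp add: Delta_def)

lemma Del_nz_expand: "Del (nz (A,B,C)) = (\<Sum>j\<le>C div n. smul ((-1)^j * of_nat ((C div n) choose j))
    (T (G (A + int w * int (B div n) + int w * int j) (B mod n)) (Dp (C mod n))))"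
  by (simp add: Delta_def normalize_Pn linext_Pn Db_eq)

lemma TG_Gw: "T (G x y) (G (int w) 0) = T (G (x + int w) y) E"
  by (simp add: TT M_single bm_eq M_one_right N_single)

lemma Del_nz: "Del (nz (A,B,C)) = T (G A B) (Dp C)"
proof (induction C arbitrary: A B)
  case 0
  then show ?case by (simp add: Del_nz_expand G_norm[of A B])
next
  case (Suc C)
  define A1 where "A1 = A + int w * int (B div n)"
  define Q where "Q = C div n"
  define e where "e = C mod n"
  show ?case
  proof (cases "Suc e = n")
    case False
    have md: "Suc C mod n = Suc e" "Suc C div n = Q"
      using False by (simp_all add: mod_Suc div_Suc e_def Q_def)
    have "Del (nz (A,B,Suc C)) = (\<Sum>j\<le>Q. smul ((-1)^j * of_nat (Q choose j))
         (T (T (G (A1 + int w * int j) (B mod n)) (Dp e)) Dy))"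
      by (simp add: Del_nz_expand md A1_def Dp_Suc_right T_assoc)
    also have "\<dots> = T (Del (nz (A,B,C))) Dy"
      by (simp add: Del_nz_expand A1_def Q_def e_def T_sum1)
    also have "\<dots> = T (G A B) (Dp (Suc C))"
      by (simp add: Suc.IH Dp_Suc_right T_assoc)
    finally show ?thesis .
  next
    case True
    have md: "Suc C mod n = 0" "Suc C div n = Suc Q"
      using True by (simp_all add: mod_Suc div_Suc e_def Q_def)
    have Dpn: "Dp n = T (Dp e) Dy" using True Dp_Suc_right[of e] by simp
    define F where "F j = T (G (A1 + int w * int j) (B mod n)) E" for j
    have FS: "T (G (A1 + int w * int j) (B mod n)) (G (int w) 0) = F (Suc j)" for j
      by (simp add: TG_Gw F_def algebra_simps)
    have "Del (nz (A,B,Suc C)) = (\<Sum>j\<le>Suc Q. smul ((-1)^j * of_nat (Suc Q choose j)) (F j))"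
      by (simp add: Del_nz_expand md A1_def F_def Dp_0)
    also have "\<dots> = (\<Sum>j\<le>Q. smul ((-1)^j * of_nat (Q choose j)) (F j))
        - (\<Sum>j\<le>Q. smul ((-1)^j * of_nat (Q choose j)) (F (Suc j)))"
      by (rule alt_pascal_pm)
    also have "\<dots> = (\<Sum>j\<le>Q. smul ((-1)^j * of_nat (Q choose j)) (T (G (A1 + int w * int j) (B mod n)) (Dp n)))"
      by (simp add: Dp_n FS F_def sum_subtractf)
    also have "\<dots> = T (Del (nz (A,B,C))) Dy"
      by (simp add: Del_nz_expand A1_def Q_def T_sum1 T_assoc Dpn[symmetric] e_def[symmetric])
    also have "\<dots> = T (G A B) (Dp (Suc C))"
      by (simp add: Suc.IH Dp_Suc_right T_assoc)
    finally show ?thesis .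
  qed
qed

lemma Del_M_words: "Del (M (Poly_Mapping.single s 1) (Poly_Mapping.single t 1))
    = T (Del (Poly_Mapping.single s 1)) (Del (Poly_Mapping.single t 1))"
proof -
  obtain a b c where s: "s = (a,b,c)" by (cases s) auto
  obtain a' b' c' where t: "t = (a',b',c')" by (cases t) auto
  have GG: "T (G a b) (T (G a' b') X) = T (G (a+a') (b+b')) X" for X
  proof -
    have "T (G a b) (T (G a' b') X) = T (tens (nz (a+a',b+b',0)) (nz (a+a',b+b',0))) X"
      by (simp add: T_assoc[symmetric] TT M_single bm_eq)
    then show ?thesis by (simp add: T_G_nz)
  qed
  have "T (Del (Poly_Mapping.single s 1)) (Del (Poly_Mapping.single t 1))
     = T (G a b) (T (Dp c) (T (G a' b') (Dp c')))"
    by (simp add: Del_single s t Db_eq T_assoc)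
  also have "\<dots> = smul (\<gamma>^(c*b')) (T (G (a+a') (b+b')) (Dp (c+c')))"
    by (simp add: Dp_G GG Dp_add)
  also have "\<dots> = Del (M (Poly_Mapping.single s 1) (Poly_Mapping.single t 1))"
    by (simp add: M_single s t bm_eq Del_nz)
  finally show ?thesis by simp
qed

lemma Del_M: "Del (M p q) = T (Del p) (Del q)"
proof -
  have A: "Del (M (Poly_Mapping.single s 1) q) = T (Del (Poly_Mapping.single s 1)) (Del q)" for s
    by (rule addhom_eqI[where F="\<lambda>q. Del (M (Poly_Mapping.single s 1) q)"
          and G="\<lambda>q. T (Del (Poly_Mapping.single s 1)) (Del q)"])
       (simp_all add: addhom_def Del_M_words)
  show ?thesis
    by (rule addhom_eqI[where F="\<lambda>p. Del (M p q)" and G="\<lambda>p. T (Del p) (Del q)"])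
       (simp_all add: addhom_def A)
qed

end


definition ev :: "word \<Rightarrow> 'k::comm_ring_1" where "ev s = (if snd (snd s) = 0 then 1 else 0)"

lemma eps_alt: "eps p = (\<Sum>s\<in>Poly_Mapping.keys p. Poly_Mapping.lookup p s * ev s)"
  by (simp add: eps_def ev_def)

lemma eps_superset: "finite S \<Longrightarrow> Poly_Mapping.keys p \<subseteq> S \<Longrightarrow> eps p = (\<Sum>s\<in>S. Poly_Mapping.lookup p s * ev s)"
  unfolding eps_alt by (rule sum.mono_neutral_left) (auto simp: in_keys_iff)

lemma eps_add[simp]: "eps (p + q) = eps p + eps q"
proof -
  let ?S = "Poly_Mapping.keys p \<union> Poly_Mapping.keys q \<union> Poly_Mapping.keys (p + q)"
  have "eps (p + q) = (\<Sum>s\<in>?S. Poly_Mapping.lookup (p+q) s * ev s)" by (rule eps_superset) auto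
  also have "\<dots> = (\<Sum>s\<in>?S. Poly_Mapping.lookup p s * ev s) + (\<Sum>s\<in>?S. Poly_Mapping.lookup q s * ev s)"
    by (simp add: lookup_add distrib_right sum.distrib)
  also have "\<dots> = eps p + eps q" by (subst (1 2) eps_superset[symmetric]) auto
  finally show ?thesis .
qed

lemma eps_zero[simp]: "eps 0 = 0" by (simp add: eps_def)
lemma eps_single[simp]: "eps (Poly_Mapping.single s c) = c * ev s"
  by (cases "c = 0") (simp_all add: eps_alt)
lemma eps_smul[simp]: "eps (smul c p) = c * eps p"
proof -
  have "eps (smul c p) = (\<Sum>s\<in>Poly_Mapping.keys p. Poly_Mapping.lookup (smul c p) s * ev s)"
    by (rule eps_superset) (auto simp: in_keys_iff)
  then show ?thesis by (simp add: eps_alt sum_distrib_left mult.assoc)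
qed
lemma eps_neg[simp]: "eps (- p) = - eps p"
  using eps_add[of p "-p"] by (simp add: eq_neg_iff_add_eq_0 add.commute)
lemma eps_diff[simp]: "eps (p - q) = eps p - eps q"
  using eps_add[of p "-q"] by simp
lemma eps_sum: "eps (sum f A) = (\<Sum>a\<in>A. eps (f a))"
  by (induction A rule: infinite_finite_induct) auto
lemma eps_linext: "eps (linext f p) = (\<Sum>s\<in>Poly_Mapping.keys p. Poly_Mapping.lookup p s * eps (f s))"
  by (simp add: linext_def eps_sum)

lemma eps_Pn: "eps (Pn w a b c q) = (if c = 0 \<and> q = 0 then 1 else 0)"
  by (simp add: Pn_def eps_sum ev_def sum_distrib_right[symmetric] alt_sum_zero)

context BH
begin

lemma eps_nz: "eps (nz (A,B,C)) = (if C = 0 then 1 else 0)"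
  using n_pos by (auto simp: normalize_Pn eps_Pn)

lemma eps_bm: "eps (bm s t) = ev s * ev t"
  by (cases s; cases t) (auto simp: bm_eq eps_nz ev_def)

lemma eps_M: "eps (M p q) = eps p * eps q"
proof -
  have "eps (M p q) = (\<Sum>s\<in>Poly_Mapping.keys p. Poly_Mapping.lookup p s *
       (\<Sum>t\<in>Poly_Mapping.keys q. Poly_Mapping.lookup q t * (ev s * ev t)))"
    by (simp add: hmul_def bilin_linext eps_linext eps_bm)
  also have "\<dots> = (\<Sum>s\<in>Poly_Mapping.keys p. \<Sum>t\<in>Poly_Mapping.keys q.
      (Poly_Mapping.lookup p s * ev s) * (Poly_Mapping.lookup q t * ev t))"
    by (simp only: sum_distrib_left) (simp only: mult_ac)
  also have "\<dots> = eps p * eps q"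
    by (simp only: eps_alt sum_product)
  finally show ?thesis .
qed


lemma g_nz: "\<gamma> \<noteq> 0"
proof
  assume "\<gamma> = 0"
  then have "\<gamma> ^ n = 0" using n_pos by simp
  with gn show False by simp
qed

lemma Sg_eq: "Sg n w = xw (- int w) (n - 1)"
  using n_pos by (simp add: Sg_def xg_def div_eq_minus1 zmod_minus1 nat_diff_distrib)

lemma xg_eq: "xg n w r i = xw (r + int w * (i div int n)) (nat (i mod int n))"
  by (simp add: xg_def)

lemma xg_small: "nat (i mod int n) < n"
  using n_pos by (simp add: nat_less_iff)

lemma N_zero[simp]: "N 0 = 0" by (simp add: N_def)
lemma N_neg[simp]: "N (- p) = - N p" by (simp add: N_def)

lemma N_xw: "b < n \<Longrightarrow> N (xw a b) = xw a b"
  using n_pos by (simp add: N_single nz_small)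

lemma MHgSg: "M Hg (Sg n w) = Hone"
  using n_pos by (simp add: Sg_eq Hg_def M_single bm_eq nz_c0 Hone_def)
lemma MSgHg: "M (Sg n w) Hg = Hone"
  using n_pos by (simp add: Sg_eq Hg_def M_single bm_eq nz_c0 Hone_def)
lemma MHyHg: "M Hy Hg = smul \<gamma> (M Hg Hy)"
  by (simp add: Hy_def Hg_def M_single bm_eq)
lemma MxwHg: "M (xw a b) Hg = M Hg (xw a b)"
  by (simp add: Hg_def M_single bm_eq add.commute)

lemma R_y: "M Hy (M Hg X) = smul \<gamma> (M Hg (M Hy X))"
  by (simp add: M_assoc[symmetric] MHyHg)
lemma R_Sg: "M (Sg n w) (M Hg X) = M Hg (M (Sg n w) X)"
  by (simp add: M_assoc[symmetric] MHgSg MSgHg)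
lemma R_Sy: "M (Sy n w \<gamma>) (M Hg X) = smul \<gamma> (M Hg (M (Sy n w \<gamma>) X))"
  by (simp add: Sy_def M_assoc R_Sg R_y)

lemma eps_Sg: "eps (Sg n w :: 'k H) = 1" by (simp add: Sg_eq ev_def)
lemma eps_Hy: "eps (Hy :: 'k H) = 0" by (simp add: Hy_def ev_def)
lemma eps_Hg: "eps (Hg :: 'k H) = 1" by (simp add: Hg_def ev_def)
lemma eps_Sy: "eps (Sy n w \<gamma>) = 0" by (simp add: Sy_def eps_M eps_Hy)
lemma eps_xg: "eps (xg n w r i :: 'k H) = 1" by (simp add: xg_def ev_def)

lemma Del_xw: "b < n \<Longrightarrow> Del (xw a b) = tens (xw a b) (xw a b)"
  using n_pos by (simp add: Del_single Db_eq Dp_0 TE_right N_single nz_small)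
lemma Del_Sg: "Del (Sg n w) = tens (Sg n w) (Sg n w)"
  using n_pos by (simp add: Sg_eq Del_xw)
lemma Del_Hy: "Del Hy = T Dy E"
  by (simp add: Hy_def Del_single Db_eq Dp_Suc Dp_0 Hone_def[symmetric] T_E_prod)
lemma T_DHy: "T (Del Hy) (tens a b) = tens (M Hy a) (M Hg b) + tens (M Hone a) (M Hy b)"
  by (simp only: Del_Hy T_E_mid) (simp add: Delta_y_def TT)
lemma Del_Sy: "Del (Sy n w \<gamma>) = tens (Sy n w \<gamma>) Hone + tens (Sg n w) (Sy n w \<gamma>)"
proof -
  have "N (Sg n w) = Sg n w" using n_pos by (simp add: Sg_eq N_xw)
  then show ?thesis
    by (simp add: Sy_def Del_M T_DHy Del_Sg TT MHgSg M_one_left)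
qed

context
  fixes \<beta> :: 'k and r i :: int
begin

abbreviation C :: "nat \<Rightarrow> nat \<Rightarrow> 'k H" where "C k l \<equiv> cmat n w \<gamma> \<beta> r i k l"

lemma C_gt: "k < l \<Longrightarrow> C k l = 0"
proof (induction k arbitrary: l)
  case 0 then show ?case by simp
next
  case (Suc k) then show ?case by (simp add: Let_def)
qed

lemma C_rec: "C (Suc k) l = M (C k l) (Sy n w \<gamma>) + smul (\<beta> * inverse (\<gamma>^l)) (M (M Hy (C k l)) (Sg n w))
    + (if l = 0 then 0 else M (C k (l-1)) (Sg n w))"
  by (cases "l = 0"; cases "l < Suc k"; cases "l = Suc k") (auto simp: Let_def C_gt)

lemma C_N: "N (C k l) = C k l"
proof (induction k)
  case 0 then show ?case using xg_small by (simp add: xg_eq N_xw)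
next
  case (Suc k) then show ?case by (simp add: C_rec N_M del: cmat.simps)
qed

lemma C_one_right: "M (C k l) Hone = C k l" by (simp add: M_one_right C_N)
lemma C_one_left: "M Hone (C k l) = C k l" by (simp add: M_one_left C_N)

lemma eps_C: "eps (C k l) = (if k = l then 1 else 0)"
proof (induction k arbitrary: l)
  case 0 then show ?case by (simp add: eps_xg)
next
  case (Suc k) then show ?case by (auto simp: C_rec eps_M eps_Sy eps_Hy eps_Sg simp del: cmat.simps)
qed


lemma GR: "M (C p l) (M Hg X) = smul (\<gamma>^p / \<gamma>^l) (M Hg (M (C p l) X))"
proof (induction p arbitrary: l X)
  case 0
  show ?case
  proof (cases "l = 0")
    case True
    then show ?thesis by (simp add: xg_eq M_assoc[symmetric] MxwHg)
  next
    case False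
    then show ?thesis by simp
  qed
next
  case (Suc p)
  note IH = Suc.IH
  show ?case
  proof (cases l)
    case 0
    then show ?thesis
      using g_nz by (simp add: C_rec M_assoc R_Sy R_Sg R_y IH mult_ac del: cmat.simps)
  next
    case (Suc l')
    then show ?thesis
      using g_nz by (simp add: C_rec M_assoc R_Sy R_Sg R_y IH mult_ac del: cmat.simps)
  qed
qed


lemma GRfinal: "M (M Hg (C p l)) (Sg n w) = smul (\<gamma>^l / \<gamma>^p) (C p l)"
proof -
  have "C p l = smul (\<gamma>^p / \<gamma>^l) (M (M Hg (C p l)) (Sg n w))"
    using GR[of p l "Sg n w"] by (simp add: MHgSg C_one_right M_assoc)
  then have "smul (\<gamma>^l / \<gamma>^p) (C p l) = smul (\<gamma>^l / \<gamma>^p * (\<gamma>^p / \<gamma>^l)) (M (M Hg (C p l)) (Sg n w))"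
    by (metis smul_smul)
  also have "\<gamma>^l / \<gamma>^p * (\<gamma>^p / \<gamma>^l) = 1" using g_nz by simp
  finally show ?thesis by simp
qed

lemma Del_C0: "Del (C 0 l) = (\<Sum>p\<le>0. tens (C 0 p) (C p l))"
  using xg_small by (cases "l = 0") (simp_all add: xg_eq Del_xw)

lemma U_split: "tens (C (Suc k) q) (C q l) = (tens (M (C k q) (Sy n w \<gamma>)) (C q l)
      + smul (\<beta> * inverse (\<gamma>^q)) (tens (M (M Hy (C k q)) (Sg n w)) (C q l)))
    + (if q = 0 then 0 else tens (M (C k (q-1)) (Sg n w)) (C q l))"
  by (simp add: C_rec del: cmat.simps)

lemma Del_C: "Del (C k l) = (\<Sum>p\<le>k. tens (C k p) (C p l))"
proof (induction k arbitrary: l)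
  case 0 then show ?case by (rule Del_C0)
next
  case (Suc k)
  define U where "U p = tens (M (C k p) (Sy n w \<gamma>)) (C p l)
      + smul (\<beta> * inverse (\<gamma>^p)) (tens (M (M Hy (C k p)) (Sg n w)) (C p l))" for p
  define V where "V p = tens (M (C k p) (Sg n w)) (C (Suc p) l)" for p
  have target: "(\<Sum>q\<le>Suc k. tens (C (Suc k) q) (C q l)) = (\<Sum>p\<le>k. U p) + (\<Sum>p\<le>k. V p)"
  proof -
    have "(\<Sum>q\<le>Suc k. tens (C (Suc k) q) (C q l))
        = (\<Sum>q\<le>Suc k. U q) + (\<Sum>q\<le>Suc k. (if q = 0 then 0 else tens (M (C k (q-1)) (Sg n w)) (C q l)))"
      by (simp add: U_split U_def sum.distrib del: cmat.simps)
    also have "(\<Sum>q\<le>Suc k. U q) = (\<Sum>q\<le>k. U q)"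
      by (simp add: U_def C_gt del: cmat.simps)
    also have "(\<Sum>q\<le>Suc k. (if q = 0 then 0 else tens (M (C k (q-1)) (Sg n w)) (C q l))) = (\<Sum>p\<le>k. V p)"
      by (simp only: sum.atMost_Suc_shift) (simp add: V_def del: cmat.simps)
    finally show ?thesis .
  qed
  have kap: "\<beta> * inverse (\<gamma>^l) * (\<gamma>^l / \<gamma>^p) = \<beta> * inverse (\<gamma>^p)" for p
    using g_nz by (simp add: field_simps)
  have Uexp: "U p = tens (M (C k p) (Sy n w \<gamma>)) (C p l)
      + smul (\<beta> * inverse (\<gamma>^l)) (tens (M (M Hy (C k p)) (Sg n w)) (smul (\<gamma>^l / \<gamma>^p) (C p l)))" for p
    by (simp only: U_def tens_smul2 smul_smul kap)
  have Vexp: "V p = tens (M (C k p) (Sg n w)) (M (C p l) (Sy n w \<gamma>))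
      + smul (\<beta> * inverse (\<gamma>^l)) (tens (M (C k p) (Sg n w)) (M (M Hy (C p l)) (Sg n w)))
      + (if l = 0 then 0 else tens (M (C k p) (Sg n w)) (M (C p (l-1)) (Sg n w)))" for p
    by (simp add: V_def C_rec del: cmat.simps)
  have "Del (C (Suc k) l) = T (Del (C k l)) (Del (Sy n w \<gamma>))
      + smul (\<beta> * inverse (\<gamma>^l)) (T (T (Del Hy) (Del (C k l))) (Del (Sg n w)))
      + (if l = 0 then 0 else T (Del (C k (l-1))) (Del (Sg n w)))"
    by (simp add: C_rec Del_M del: cmat.simps)
  also have "\<dots> = (\<Sum>p\<le>k. tens (M (C k p) (Sy n w \<gamma>)) (C p l) + tens (M (C k p) (Sg n w)) (M (C p l) (Sy n w \<gamma>)))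
      + smul (\<beta> * inverse (\<gamma>^l)) (\<Sum>p\<le>k. tens (M (M Hy (C k p)) (Sg n w)) (smul (\<gamma>^l / \<gamma>^p) (C p l))
            + tens (M (C k p) (Sg n w)) (M (M Hy (C p l)) (Sg n w)))
      + (if l = 0 then 0 else (\<Sum>p\<le>k. tens (M (C k p) (Sg n w)) (M (C p (l-1)) (Sg n w))))"
    by (simp add: Suc.IH Del_Sy Del_Sg T_sum1 T_sum2 T_DHy TT C_one_right C_one_left GRfinal sum.distrib del: cmat.simps)
  also have "\<dots> = (\<Sum>p\<le>k. U p) + (\<Sum>p\<le>k. V p)"
    by (cases "l = 0") (simp_all add: Uexp Vexp sum.distrib smul_sum add_ac del: cmat.simps)
  finally show ?case using target by simp
qed

end
end

theorem corollary3p13: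
  fixes n w :: nat and \<gamma> \<beta> :: "'k::field_char_0" and r i :: int and m :: nat
  assumes alg_closed: "\<forall>p :: 'k poly. degree p > 0 \<longrightarrow> (\<exists>z. poly p z = 0)"
    and n_pos: "n > 0" and w_pos: "w > 0"
    and prim: "\<gamma> ^ n = 1" "\<forall>j. 0 < j \<and> j < n \<longrightarrow> \<gamma> ^ j \<noteq> 1"
    and beta: "\<beta> \<noteq> 0"
  shows "\<forall>k\<le>m. \<forall>l\<le>m.
     Delta n w \<gamma> (Amat n w \<gamma> \<beta> r i m k l)
       = (\<Sum>p\<le>m. tens (Amat n w \<gamma> \<beta> r i m k p) (Amat n w \<gamma> \<beta> r i m p l))
   \<and> eps (Amat n w \<gamma> \<beta> r i m k l) = (if k = l then 1 else 0)"
proof -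
  interpret BH n w \<gamma> using n_pos prim by unfold_locales auto
  have Am: "Amat n w \<gamma> \<beta> r i m k l = cmat n w \<gamma> \<beta> r i k l" if "k \<le> m" for k l
    using that by (auto simp: Amat_def C_gt simp del: cmat.simps)
  show ?thesis
  proof (intro allI impI conjI)
    fix k l assume k: "k \<le> m" and l: "l \<le> m"
    have "(\<Sum>p\<le>m. tens (Amat n w \<gamma> \<beta> r i m k p) (Amat n w \<gamma> \<beta> r i m p l))
        = (\<Sum>p\<le>m. tens (cmat n w \<gamma> \<beta> r i k p) (cmat n w \<gamma> \<beta> r i p l))"
      by (rule sum.cong) (simp_all add: Am k)
    also have "\<dots> = (\<Sum>p\<le>k. tens (cmat n w \<gamma> \<beta> r i k p) (cmat n w \<gamma> \<beta> r i p l))"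
      by (rule sum.mono_neutral_right) (use k in \<open>auto simp: C_gt simp del: cmat.simps\<close>)
    also have "\<dots> = Delta n w \<gamma> (Amat n w \<gamma> \<beta> r i m k l)"
      by (simp add: Am k Del_C del: cmat.simps)
    finally show "Delta n w \<gamma> (Amat n w \<gamma> \<beta> r i m k l)
       = (\<Sum>p\<le>m. tens (Amat n w \<gamma> \<beta> r i m k p) (Amat n w \<gamma> \<beta> r i m p l))" by simp
    show "eps (Amat n w \<gamma> \<beta> r i m k l) = (if k = l then 1 else 0)"
      by (simp add: Am k eps_C del: cmat.simps)
  qed
qed


end
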